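(* Let $(A,\cdot,\omega)$ be a symmetric twisted partial $H$-module algebra and let $u,v\in\mathrm{Hom}(H,A)$ be weakly convolution-invertible linear maps, such that $v*u$ is weakly convolution-invertible with $(v*u)^{-1}=u^{-1}*v^{-1}$. Then $\omega^{v*u}=(\omega^{u})^{v}$ and $\cdot^{v*u}=(\cdot^{u})^{v}$, i.e. $h\cdot^{v*u}a=h(\cdot^u)^v a$ for all $h\in H$, $a\in A$, where $(\omega^u)^v$ and $(\cdot^u)^v$ denote the transforms by $v$ of the pair $(\omega^u,\cdot^u)$.
   Context: $k$ a field, $H$ a Hopf algebra over $k$ with Sweedler notation $\Delta(h)=h_{(1)}\otimes h_{(2)}$, counit $\varepsilon$, antipode $S$; $A$ a unital $k$-algebra. A twisted partial action of $H$ on $A$ is a pair of linear maps $h\otimes a\mapsto h\cdot a$ and $\omega:H\otimes H\to A$ with $1_H\cdot a=a$, $h\cdot(ab)=(h_{(1)}\cdot a)(h_{(2)}\cdot b)$, $(h_{(1)}\cdot(l_{(1)}\cdot a))\omega(h_{(2)},l_{(2)})=\omega(h_{(1)},l_{(1)})(h_{(2)}l_{(2)}\cdot a)$, $\omega(h,l)=\omega(h_{(1)},l_{(1)})(h_{(2)}l_{(2)}\cdot 1_A)$. Convolution on $\mathrm{Hom}(H,A)$: $(f*g)(h)=f(h_{(1)})g(h_{(2)})$, and similarly on $\mathrm{Hom}(H\otimes H,A)$. Let $e(h)=h\cdot1_A$, $f_1(h,k)=(h\cdot 1_A)\varepsilon(k)$, $f_2(h,k)=hk\cdot 1_A$. The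 twisted partial action is symmetric if: $e$ is central in $\mathrm{Hom}(H,A)$; $f_1,f_2$ are central in $\mathrm{Hom}(H\otimes H,A)$; $\omega$ satisfies (N) $\omega(1_H,h)=\omega(h,1_H)=h\cdot 1_A$ and (T3) above, and has a convolution inverse $\omega'$ in the ideal generated by $f_1*f_2$ (i.e. $\omega*\omega'=\omega'*\omega=f_1*f_2$); and $h\cdot(k\cdot 1_A)=(h_{(1)}\cdot 1_A)(h_{(2)}k\cdot 1_A)$ for all $h,k$. A linear map $v\in\mathrm{Hom}(H,A)$ is weakly convolution-invertible if there is $u\in\mathrm{Hom}(H,A)$ with $u*v=v*u=e$, $u(h)=u(h_{(1)})(h_{(2)}\cdot1_A)=(h_{(1)}\cdot1_A)u(h_{(2)})$ and $u(1_H)=v(1_H)=1_A$; write $v^{-1}=u$. For such $v$ define $\omega^v(h,g)=v(h_{(1)})(h_{(2)}\cdot v(g_{(1)}))\omega(h_{(3)},g_{(2)})v^{-1}(h_{(4)}g_{(3)})$ and $h\cdot^v a=v(h_{(1)})(h_{(2)}\cdot a)v^{-1}(h_{(3)})$. *)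

theory Defs
  imports Complex_Main
begin

text \<open>
Conventions.
  \<^item> The field k is a type 'k :: field.
  \<^item> H is a type 'h :: ring_1 (its multiplication and unit) with scalar multiplication
    smH :: 'k => 'h => 'h; A is a type 'a :: ring_1 with scalar multiplication smA.
  \<^item> Linear maps are Vector_Spaces.linear; maps on H \<otimes> H are bilinear maps on H \<times> H.
  \<^item> The comultiplication is given in Sweedler form: Delta h is a finite list of pairs
    (h1_i, h2_i) with Delta(h) = sum_i h1_i \<otimes> h2_i.  Equalities in tensor powers
    of H are expressed by testing against all k-valued multilinear forms
    (which separate points of H \<otimes> H and H \<otimes> H \<otimes> H).
  \<^item> Iterated Sweedler notation: h(1) \<otimes> h(2) \<otimes> h(3) = (Delta \<otimes> id) Delta h etc.
    All expressions in which it is used are multilinear, hence well defined.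
\<close>

definition bilin :: "('k::field \<Rightarrow> 'b::ab_group_add \<Rightarrow> 'b) \<Rightarrow> ('k \<Rightarrow> 'c::ab_group_add \<Rightarrow> 'c)
    \<Rightarrow> ('k \<Rightarrow> 'd::ab_group_add \<Rightarrow> 'd) \<Rightarrow> ('b \<Rightarrow> 'c \<Rightarrow> 'd) \<Rightarrow> bool" where
  "bilin s1 s2 s3 F \<longleftrightarrow>
     (\<forall>x. Vector_Spaces.linear s2 s3 (F x)) \<and> (\<forall>y. Vector_Spaces.linear s1 s3 (\<lambda>x. F x y))"

definition trilin :: "('k::field \<Rightarrow> 'b::ab_group_add \<Rightarrow> 'b) \<Rightarrow> ('k \<Rightarrow> 'd::ab_group_add \<Rightarrow> 'd)
    \<Rightarrow> ('b \<Rightarrow> 'b \<Rightarrow> 'b \<Rightarrow> 'd) \<Rightarrow> bool" where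
  "trilin s1 s3 F \<longleftrightarrow>
     (\<forall>y z. Vector_Spaces.linear s1 s3 (\<lambda>x. F x y z)) \<and>
     (\<forall>x z. Vector_Spaces.linear s1 s3 (\<lambda>y. F x y z)) \<and>
     (\<forall>x y. Vector_Spaces.linear s1 s3 (\<lambda>z. F x y z))"

abbreviation kscale :: "'k::field \<Rightarrow> 'k \<Rightarrow> 'k" where "kscale \<equiv> (*)"

definition k_algebra :: "('k::field \<Rightarrow> 'r::ring_1 \<Rightarrow> 'r) \<Rightarrow> bool" where
  "k_algebra sm \<longleftrightarrow> vector_space sm \<and>
     (\<forall>c x y. sm c (x * y) = sm c x * y \<and> sm c (x * y) = x * sm c y)"

definition Delta3 :: "('h \<Rightarrow> ('h \<times> 'h) list) \<Rightarrow> 'h \<Rightarrow> ('h \<times> 'h \<times> 'h) list" where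
  "Delta3 \<Delta> h = concat (map (\<lambda>(x, y). map (\<lambda>(x1, x2). (x1, x2, y)) (\<Delta> x)) (\<Delta> h))"

definition Delta4 :: "('h \<Rightarrow> ('h \<times> 'h) list) \<Rightarrow> 'h \<Rightarrow> ('h \<times> 'h \<times> 'h \<times> 'h) list" where
  "Delta4 \<Delta> h = concat (map (\<lambda>(x, y, z). map (\<lambda>(x1, x2). (x1, x2, y, z)) (\<Delta> x)) (Delta3 \<Delta> h))"

definition hopf_algebra :: "('k::field \<Rightarrow> 'h::ring_1 \<Rightarrow> 'h) \<Rightarrow> ('h \<Rightarrow> ('h \<times> 'h) list)
    \<Rightarrow> ('h \<Rightarrow> 'k) \<Rightarrow> ('h \<Rightarrow> 'h) \<Rightarrow> bool" where
  "hopf_algebra smH \<Delta> \<epsilon> S \<longleftrightarrow>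
     k_algebra smH \<and>
     \<comment> \<open>Delta is linear\<close>
     (\<forall>F. bilin smH smH kscale F \<longrightarrow>
        (\<forall>g h. (\<Sum>(x, y)\<leftarrow>\<Delta> (g + h). F x y) = (\<Sum>(x, y)\<leftarrow>\<Delta> g. F x y) + (\<Sum>(x, y)\<leftarrow>\<Delta> h. F x y)) \<and>
        (\<forall>c h. (\<Sum>(x, y)\<leftarrow>\<Delta> (smH c h). F x y) = c * (\<Sum>(x, y)\<leftarrow>\<Delta> h. F x y))) \<and>
     \<comment> \<open>coassociativity\<close>
     (\<forall>F. trilin smH kscale F \<longrightarrow>
        (\<forall>h. (\<Sum>(x, y)\<leftarrow>\<Delta> h. \<Sum>(x1, x2)\<leftarrow>\<Delta> x. F x1 x2 y) =
             (\<Sum>(x, y)\<leftarrow>\<Delta> h. \<Sum>(y1, y2)\<leftarrow>\<Delta> y. F x y1 y2))) \<and>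
     \<comment> \<open>counit\<close>
     Vector_Spaces.linear smH kscale \<epsilon> \<and>
     (\<forall>h. (\<Sum>(x, y)\<leftarrow>\<Delta> h. smH (\<epsilon> x) y) = h) \<and>
     (\<forall>h. (\<Sum>(x, y)\<leftarrow>\<Delta> h. smH (\<epsilon> y) x) = h) \<and>
     \<comment> \<open>Delta and epsilon are algebra maps\<close>
     (\<forall>F. bilin smH smH kscale F \<longrightarrow>
        (\<forall>g h. (\<Sum>(x, y)\<leftarrow>\<Delta> (g * h). F x y) =
               (\<Sum>(a, b)\<leftarrow>\<Delta> g. \<Sum>(c, d)\<leftarrow>\<Delta> h. F (a * c) (b * d))) \<and>
        (\<Sum>(x, y)\<leftarrow>\<Delta> 1. F x y) = F 1 1) \<and>
     (\<forall>g h. \<epsilon> (g * h) = \<epsilon> g * \<epsilon> h) \<and> \<epsilon> 1 = 1 \<and>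
     \<comment> \<open>antipode\<close>
     Vector_Spaces.linear smH smH S \<and>
     (\<forall>h. (\<Sum>(x, y)\<leftarrow>\<Delta> h. S x * y) = smH (\<epsilon> h) 1) \<and>
     (\<forall>h. (\<Sum>(x, y)\<leftarrow>\<Delta> h. x * S y) = smH (\<epsilon> h) 1)"

definition conv :: "('h \<Rightarrow> ('h \<times> 'h) list) \<Rightarrow> ('h \<Rightarrow> 'a::ring_1) \<Rightarrow> ('h \<Rightarrow> 'a) \<Rightarrow> 'h \<Rightarrow> 'a" where
  "conv \<Delta> f g h = (\<Sum>(x, y)\<leftarrow>\<Delta> h. f x * g y)"

definition conv2 :: "('h \<Rightarrow> ('h \<times> 'h) list) \<Rightarrow> ('h \<Rightarrow> 'h \<Rightarrow> 'a::ring_1) \<Rightarrow> ('h \<Rightarrow> 'h \<Rightarrow> 'a)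
    \<Rightarrow> 'h \<Rightarrow> 'h \<Rightarrow> 'a" where
  "conv2 \<Delta> F G h l = (\<Sum>(h1, h2)\<leftarrow>\<Delta> h. \<Sum>(l1, l2)\<leftarrow>\<Delta> l. F h1 l1 * G h2 l2)"

definition twisted_partial_action :: "('k::field \<Rightarrow> 'h::ring_1 \<Rightarrow> 'h) \<Rightarrow> ('k \<Rightarrow> 'a::ring_1 \<Rightarrow> 'a)
    \<Rightarrow> ('h \<Rightarrow> ('h \<times> 'h) list) \<Rightarrow> ('h \<Rightarrow> 'a \<Rightarrow> 'a) \<Rightarrow> ('h \<Rightarrow> 'h \<Rightarrow> 'a) \<Rightarrow> bool" where
  "twisted_partial_action smH smA \<Delta> act \<omega> \<longleftrightarrow>
     bilin smH smA smA act \<and> bilin smH smH smA \<omega> \<and>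
     (\<forall>a. act 1 a = a) \<and>
     (\<forall>h a b. act h (a * b) = (\<Sum>(x, y)\<leftarrow>\<Delta> h. act x a * act y b)) \<and>
     (\<forall>h l a. (\<Sum>(h1, h2)\<leftarrow>\<Delta> h. \<Sum>(l1, l2)\<leftarrow>\<Delta> l. act h1 (act l1 a) * \<omega> h2 l2) =
              (\<Sum>(h1, h2)\<leftarrow>\<Delta> h. \<Sum>(l1, l2)\<leftarrow>\<Delta> l. \<omega> h1 l1 * act (h2 * l2) a)) \<and>
     (\<forall>h l. \<omega> h l = (\<Sum>(h1, h2)\<leftarrow>\<Delta> h. \<Sum>(l1, l2)\<leftarrow>\<Delta> l. \<omega> h1 l1 * act (h2 * l2) 1))"

definition symmetric_tpa :: "('k::field \<Rightarrow> 'h::ring_1 \<Rightarrow> 'h) \<Rightarrow> ('k \<Rightarrow> 'a::ring_1 \<Rightarrow> 'a)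
    \<Rightarrow> ('h \<Rightarrow> ('h \<times> 'h) list) \<Rightarrow> ('h \<Rightarrow> 'k) \<Rightarrow> ('h \<Rightarrow> 'a \<Rightarrow> 'a) \<Rightarrow> ('h \<Rightarrow> 'h \<Rightarrow> 'a) \<Rightarrow> bool" where
  "symmetric_tpa smH smA \<Delta> \<epsilon> act \<omega> \<longleftrightarrow>
     twisted_partial_action smH smA \<Delta> act \<omega> \<and>
     (let e = (\<lambda>h. act h 1);
          f1 = (\<lambda>h k. smA (\<epsilon> k) (act h 1));
          f2 = (\<lambda>h k. act (h * k) 1) in
       (\<forall>f. Vector_Spaces.linear smH smA f \<longrightarrow> conv \<Delta> e f = conv \<Delta> f e) \<and>
       (\<forall>F. bilin smH smH smA F \<longrightarrow> conv2 \<Delta> f1 F = conv2 \<Delta> F f1) \<and>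
       (\<forall>F. bilin smH smH smA F \<longrightarrow> conv2 \<Delta> f2 F = conv2 \<Delta> F f2) \<and>
       (\<forall>h. \<omega> 1 h = act h 1 \<and> \<omega> h 1 = act h 1) \<and>
       (\<exists>\<omega>'. bilin smH smH smA \<omega>' \<and>
              conv2 \<Delta> \<omega> \<omega>' = conv2 \<Delta> f1 f2 \<and> conv2 \<Delta> \<omega>' \<omega> = conv2 \<Delta> f1 f2) \<and>
       (\<forall>h k. act h (act k 1) = (\<Sum>(h1, h2)\<leftarrow>\<Delta> h. act h1 1 * act (h2 * k) 1)))"

text \<open>u is a weak convolution inverse of v (so u = v^{-1})\<close>
definition weak_conv_inverse :: "('k::field \<Rightarrow> 'h::ring_1 \<Rightarrow> 'h) \<Rightarrow> ('k \<Rightarrow> 'a::ring_1 \<Rightarrow> 'a)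
    \<Rightarrow> ('h \<Rightarrow> ('h \<times> 'h) list) \<Rightarrow> ('h \<Rightarrow> 'a \<Rightarrow> 'a) \<Rightarrow> ('h \<Rightarrow> 'a) \<Rightarrow> ('h \<Rightarrow> 'a) \<Rightarrow> bool" where
  "weak_conv_inverse smH smA \<Delta> act v u \<longleftrightarrow>
     Vector_Spaces.linear smH smA u \<and>
     conv \<Delta> u v = (\<lambda>h. act h 1) \<and> conv \<Delta> v u = (\<lambda>h. act h 1) \<and>
     (\<forall>h. u h = (\<Sum>(x, y)\<leftarrow>\<Delta> h. u x * act y 1)) \<and>
     (\<forall>h. u h = (\<Sum>(x, y)\<leftarrow>\<Delta> h. act x 1 * u y)) \<and>
     u 1 = 1 \<and> v 1 = 1"

text \<open>The transformed action  h \<cdot>^v a = v(h1)(h2 \<cdot> a)v^{-1}(h3); here vi = v^{-1}\<close>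
definition tw_act :: "('h \<Rightarrow> ('h \<times> 'h) list) \<Rightarrow> ('h \<Rightarrow> 'a::ring_1 \<Rightarrow> 'a) \<Rightarrow> ('h \<Rightarrow> 'a) \<Rightarrow> ('h \<Rightarrow> 'a)
    \<Rightarrow> 'h \<Rightarrow> 'a \<Rightarrow> 'a" where
  "tw_act \<Delta> act v vi h a = (\<Sum>(h1, h2, h3)\<leftarrow>Delta3 \<Delta> h. v h1 * act h2 a * vi h3)"

text \<open>The transformed cocycle
  omega^v(h,g) = v(h1)(h2 \<cdot> v(g1)) omega(h3,g2) v^{-1}(h4 g3); here vi = v^{-1}\<close>
definition tw_omega :: "('h::ring_1 \<Rightarrow> ('h \<times> 'h) list) \<Rightarrow> ('h \<Rightarrow> 'a::ring_1 \<Rightarrow> 'a) \<Rightarrow> ('h \<Rightarrow> 'h \<Rightarrow> 'a)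
    \<Rightarrow> ('h \<Rightarrow> 'a) \<Rightarrow> ('h \<Rightarrow> 'a) \<Rightarrow> 'h \<Rightarrow> 'h \<Rightarrow> 'a" where
  "tw_omega \<Delta> act \<omega> v vi h g =
     (\<Sum>(h1, h2, h3, h4)\<leftarrow>Delta4 \<Delta> h. \<Sum>(g1, g2, g3)\<leftarrow>Delta3 \<Delta> g.
        v h1 * act h2 (v g1) * \<omega> h3 g2 * vi (h4 * g3))"

end

theory Submission
  imports Defs
begin

lemma sum_list_concat_map: "sum_list (concat (map f xs)) = sum_list (map (\<lambda>x. sum_list (f x)) xs)"
  by (induct xs) auto

lemma sum_list_swap: "(\<Sum>x\<leftarrow>xs. \<Sum>y\<leftarrow>ys. (f x y :: 'a::comm_monoid_add)) = (\<Sum>y\<leftarrow>ys. \<Sum>x\<leftarrow>xs. f x y)"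
  by (induct xs) (auto simp: sum_list_addf)

lemma vs_kscale: "vector_space (kscale :: 'k::field \<Rightarrow> 'k \<Rightarrow> 'k)"
  by unfold_locales (auto simp: algebra_simps)

lemma lin_add: "Vector_Spaces.linear s1 s2 f \<Longrightarrow> f (x + y) = f x + f y"
  by (simp add: Vector_Spaces.linear_iff)
lemma lin_scale: "Vector_Spaces.linear s1 s2 f \<Longrightarrow> f (s1 c x) = s2 c (f x)"
  by (simp add: Vector_Spaces.linear_iff)
lemma lin_zero: "Vector_Spaces.linear s1 s2 f \<Longrightarrow> f 0 = 0"
  using lin_add[of s1 s2 f 0 0] by simp
lemma lin_sum_list: "Vector_Spaces.linear s1 s2 f \<Longrightarrow> f (sum_list (map g xs)) = sum_list (map (\<lambda>x. f (g x)) xs)"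
  by (induct xs) (auto simp: lin_add lin_zero)

lemma separation:
  assumes vs: "vector_space (s :: 'k::field \<Rightarrow> 'a::ab_group_add \<Rightarrow> 'a)"
    and eq: "\<And>\<phi>. Vector_Spaces.linear s kscale \<phi> \<Longrightarrow> \<phi> x = \<phi> y"
  shows "x = y"
proof (rule ccontr)
  assume ne: "x \<noteq> y"
  interpret vector_space s by fact
  obtain B where B: "independent B" "UNIV \<subseteq> span B"
    using basis_exists[of UNIV] by blast
  have "\<exists>b. representation B (x - y) b \<noteq> 0"
  proof (rule ccontr)
    assume "\<not> ?thesis"
    then have "{b. representation B (x - y) b \<noteq> 0} = {}" by auto
    with sum_nonzero_representation_eq[OF B(1), of "x - y"] B(2) have "x - y = 0" by auto
    with ne show False by simp
  qed
  then obtain b where b: "representation B (x - y) b \<noteq> 0" by blast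
  have lin: "Vector_Spaces.linear s kscale (\<lambda>v. representation B v b)"
    using linear_representation[OF B(1)] B(2) by auto
  from eq[OF lin] have "representation B x b = representation B y b" .
  moreover have "representation B (x - y) b = representation B x b - representation B y b"
    using lin_add[OF lin, of "x - y" y] by simp
  ultimately show False using b by simp
qed

lemma D_swap: "(\<Sum>(a,b)\<leftarrow>xs. \<Sum>(c,d)\<leftarrow>ys. (f a b c d :: 'a::comm_monoid_add)) = (\<Sum>(c,d)\<leftarrow>ys. \<Sum>(a,b)\<leftarrow>xs. f a b c d)"
  using sum_list_swap[of "\<lambda>x y. f (fst x) (snd x) (fst y) (snd y)" ys xs] by (simp add: split_def)

lemma D_cong: "(\<And>a b. F a b = G a b) \<Longrightarrow> (\<Sum>(a,b)\<leftarrow>xs. F a b) = (\<Sum>(a,b)\<leftarrow>xs. G a b)"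
  by simp
lemma D_mult_const: "(\<Sum>(a,b)\<leftarrow>xs. F a b) * (c::'a::semiring_0) = (\<Sum>(a,b)\<leftarrow>xs. F a b * c)"
  by (induct xs) (auto simp: distrib_right)
lemma D_const_mult: "(c::'a::semiring_0) * (\<Sum>(a,b)\<leftarrow>xs. F a b) = (\<Sum>(a,b)\<leftarrow>xs. c * F a b)"
  by (induct xs) (auto simp: distrib_left)

lemma sum_list_concat': "sum_list (concat xs) = sum_list (map sum_list xs)" by (induct xs) auto
lemma sum_Delta3: "(\<Sum>(a,b,c)\<leftarrow>Delta3 \<Delta> h. F a b c) = (\<Sum>(x,y)\<leftarrow>\<Delta> h. \<Sum>(a,b)\<leftarrow>\<Delta> x. (F a b y :: 'a::comm_monoid_add))"
  unfolding Delta3_def by (simp add: map_concat sum_list_concat' o_def split_def)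
lemma sum_Delta4: "(\<Sum>(a,b,c,d)\<leftarrow>Delta4 \<Delta> h. F a b c d) = (\<Sum>(X,z)\<leftarrow>\<Delta> h. \<Sum>(x,y)\<leftarrow>\<Delta> X. \<Sum>(a,b)\<leftarrow>\<Delta> x. (F a b y z :: 'a::comm_monoid_add))"
  unfolding Delta4_def Delta3_def by (simp add: map_concat sum_list_concat' o_def split_def)

lemma U1: "tw_act \<Delta> act v vi h a = conv \<Delta> (conv \<Delta> v (\<lambda>h. act h a)) vi h"
  unfolding tw_act_def conv_def sum_Delta3 by (simp add: D_mult_const)

context
  fixes smH :: "'k::field \<Rightarrow> 'h::ring_1 \<Rightarrow> 'h"
    and smA :: "'k \<Rightarrow> 'a::ring_1 \<Rightarrow> 'a"
    and \<Delta> :: "'h \<Rightarrow> ('h \<times> 'h) list" and \<epsilon> :: "'h \<Rightarrow> 'k" and S :: "'h \<Rightarrow> 'h"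
  assumes hopf: "hopf_algebra smH \<Delta> \<epsilon> S"
    and kA: "k_algebra smA"
begin

lemma vsH: "vector_space smH" using hopf unfolding hopf_algebra_def k_algebra_def by blast
lemma vsA: "vector_space smA" using kA unfolding k_algebra_def by blast
lemma smA_mult1: "smA c (x * y) = smA c x * y" using kA unfolding k_algebra_def by blast
lemma smA_mult2: "smA c (x * y) = x * smA c y" using kA unfolding k_algebra_def by blast
lemma smH_mult1: "smH c (x * y) = smH c x * y" using hopf unfolding hopf_algebra_def k_algebra_def by blast
lemma smH_mult2: "smH c (x * y) = x * smH c y" using hopf unfolding hopf_algebra_def k_algebra_def by blast

interpretation vA: vector_space smA by (rule vsA)

abbreviation "lin \<equiv> Vector_Spaces.linear smH smA"
abbreviation "bil \<equiv> bilin smH smH smA"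

lemma linI: "(\<And>x y. f (x + y) = f x + f y) \<Longrightarrow> (\<And>c x. f (smH c x) = smA c (f x)) \<Longrightarrow> lin f"
  using vsH vsA by (simp add: Vector_Spaces.linear_iff)

lemma linK_comp: "Vector_Spaces.linear smA kscale \<phi> \<Longrightarrow> lin f \<Longrightarrow> Vector_Spaces.linear smH kscale (\<lambda>x. \<phi> (f x))"
  using Vector_Spaces.linear_compose[of smH smA f kscale \<phi>] by (simp add: o_def)

lemma bil_comp: "Vector_Spaces.linear smA kscale \<phi> \<Longrightarrow> bil F \<Longrightarrow> bilin smH smH kscale (\<lambda>x y. \<phi> (F x y))"
  unfolding bilin_def using linK_comp by auto

lemma tril_comp: "Vector_Spaces.linear smA kscale \<phi> \<Longrightarrow> trilin smH smA F \<Longrightarrow> trilin smH kscale (\<lambda>x y z. \<phi> (F x y z))"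
  unfolding trilin_def using linK_comp[of \<phi>] by blast

lemma sepA: "(\<And>\<phi>. Vector_Spaces.linear smA kscale \<phi> \<Longrightarrow> \<phi> x = \<phi> y) \<Longrightarrow> x = y"
  using separation[OF vsA] by blast

lemma phi_D: "Vector_Spaces.linear smA kscale \<phi> \<Longrightarrow> \<phi> (\<Sum>(x,y)\<leftarrow>xs. F x y) = (\<Sum>(x,y)\<leftarrow>xs. \<phi> (F x y))"
  using lin_sum_list[of smA kscale \<phi> "\<lambda>(x,y). F x y" xs] by (simp add: split_def)

lemma D_add: "bil F \<Longrightarrow> (\<Sum>(x,y)\<leftarrow>\<Delta> (g + h). F x y) = (\<Sum>(x,y)\<leftarrow>\<Delta> g. F x y) + (\<Sum>(x,y)\<leftarrow>\<Delta> h. F x y)"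
proof (rule sepA)
  fix \<phi> :: "'a \<Rightarrow> 'k" assume p: "Vector_Spaces.linear smA kscale \<phi>" and b: "bil F"
  have "bilin smH smH kscale (\<lambda>x y. \<phi> (F x y))" by (rule bil_comp[OF p b])
  then show "\<phi> (\<Sum>(x,y)\<leftarrow>\<Delta> (g + h). F x y) = \<phi> ((\<Sum>(x,y)\<leftarrow>\<Delta> g. F x y) + (\<Sum>(x,y)\<leftarrow>\<Delta> h. F x y))"
    using hopf p by (simp add: hopf_algebra_def phi_D lin_add)
qed

lemma D_scale: "bil F \<Longrightarrow> (\<Sum>(x,y)\<leftarrow>\<Delta> (smH c h). F x y) = smA c (\<Sum>(x,y)\<leftarrow>\<Delta> h. F x y)"
proof (rule sepA)
  fix \<phi> :: "'a \<Rightarrow> 'k" assume p: "Vector_Spaces.linear smA kscale \<phi>" and b: "bil F"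
  have "bilin smH smH kscale (\<lambda>x y. \<phi> (F x y))" by (rule bil_comp[OF p b])
  then show "\<phi> (\<Sum>(x,y)\<leftarrow>\<Delta> (smH c h). F x y) = \<phi> (smA c (\<Sum>(x,y)\<leftarrow>\<Delta> h. F x y))"
    using hopf p by (simp add: hopf_algebra_def phi_D lin_scale)
qed

lemma lin_Dh: "bil F \<Longrightarrow> lin (\<lambda>h. \<Sum>(x,y)\<leftarrow>\<Delta> h. F x y)"
  by (rule linI) (simp_all add: D_add D_scale)

lemma D_coassoc: "trilin smH smA F \<Longrightarrow>
   (\<Sum>(x, y)\<leftarrow>\<Delta> h. \<Sum>(x1, x2)\<leftarrow>\<Delta> x. F x1 x2 y) = (\<Sum>(x, y)\<leftarrow>\<Delta> h. \<Sum>(y1, y2)\<leftarrow>\<Delta> y. F x y1 y2)"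
proof (rule sepA)
  fix \<phi> :: "'a \<Rightarrow> 'k" assume p: "Vector_Spaces.linear smA kscale \<phi>" and b: "trilin smH smA F"
  have "trilin smH kscale (\<lambda>x y z. \<phi> (F x y z))" by (rule tril_comp[OF p b])
  then show "\<phi> (\<Sum>(x, y)\<leftarrow>\<Delta> h. \<Sum>(x1, x2)\<leftarrow>\<Delta> x. F x1 x2 y) = \<phi> (\<Sum>(x, y)\<leftarrow>\<Delta> h. \<Sum>(y1, y2)\<leftarrow>\<Delta> y. F x y1 y2)"
    using hopf p by (simp add: hopf_algebra_def phi_D)
qed

lemma D_mult: "bil F \<Longrightarrow> (\<Sum>(x, y)\<leftarrow>\<Delta> (g * h). F x y) =
               (\<Sum>(a, b)\<leftarrow>\<Delta> g. \<Sum>(c, d)\<leftarrow>\<Delta> h. F (a * c) (b * d))"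
proof (rule sepA)
  fix \<phi> :: "'a \<Rightarrow> 'k" assume p: "Vector_Spaces.linear smA kscale \<phi>" and b: "bil F"
  have "bilin smH smH kscale (\<lambda>x y. \<phi> (F x y))" by (rule bil_comp[OF p b])
  then show "\<phi> (\<Sum>(x, y)\<leftarrow>\<Delta> (g * h). F x y) = \<phi> (\<Sum>(a, b)\<leftarrow>\<Delta> g. \<Sum>(c, d)\<leftarrow>\<Delta> h. F (a * c) (b * d))"
    using hopf p by (simp add: hopf_algebra_def phi_D)
qed

lemma counit1: "lin f \<Longrightarrow> (\<Sum>(x, y)\<leftarrow>\<Delta> h. smA (\<epsilon> x) (f y)) = f h"
proof -
  assume l: "lin f"
  have "f h = f (\<Sum>(x, y)\<leftarrow>\<Delta> h. smH (\<epsilon> x) y)" using hopf by (simp add: hopf_algebra_def)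
  also have "\<dots> = (\<Sum>(x, y)\<leftarrow>\<Delta> h. smA (\<epsilon> x) (f y))"
    using lin_sum_list[OF l, of "\<lambda>(x,y). smH (\<epsilon> x) y" "\<Delta> h"] lin_scale[OF l]
    by (simp add: split_def)
  finally show ?thesis by simp
qed

lemma counit2: "lin f \<Longrightarrow> (\<Sum>(x, y)\<leftarrow>\<Delta> h. smA (\<epsilon> y) (f x)) = f h"
proof -
  assume l: "lin f"
  have "f h = f (\<Sum>(x, y)\<leftarrow>\<Delta> h. smH (\<epsilon> y) x)" using hopf by (simp add: hopf_algebra_def)
  also have "\<dots> = (\<Sum>(x, y)\<leftarrow>\<Delta> h. smA (\<epsilon> y) (f x))"
    using lin_sum_list[OF l, of "\<lambda>(x,y). smH (\<epsilon> y) x" "\<Delta> h"] lin_scale[OF l]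
    by (simp add: split_def)
  finally show ?thesis by simp
qed

lemma eps_lin: "Vector_Spaces.linear smH kscale \<epsilon>" using hopf by (simp add: hopf_algebra_def)

lemma counit_eps: "(\<Sum>(x, y)\<leftarrow>\<Delta> h. \<epsilon> x * \<epsilon> y) = \<epsilon> h"
proof -
  have "\<epsilon> h = \<epsilon> (\<Sum>(x, y)\<leftarrow>\<Delta> h. smH (\<epsilon> x) y)" using hopf by (simp add: hopf_algebra_def)
  also have "\<dots> = (\<Sum>(x, y)\<leftarrow>\<Delta> h. \<epsilon> x * \<epsilon> y)"
    using lin_sum_list[OF eps_lin, of "\<lambda>(x,y). smH (\<epsilon> x) y" "\<Delta> h"] lin_scale[OF eps_lin]
    by (simp add: split_def)
  finally show ?thesis by simp
qed

lemma lin_mult_r: "lin f \<Longrightarrow> lin (\<lambda>x. f x * c)"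
  by (rule linI) (simp_all add: lin_add lin_scale distrib_right smA_mult1)
lemma lin_mult_l: "lin f \<Longrightarrow> lin (\<lambda>x. c * f x)"
  by (rule linI) (simp_all add: lin_add lin_scale distrib_left smA_mult2)
lemma lin_plus: "lin f \<Longrightarrow> lin g \<Longrightarrow> lin (\<lambda>x. f x + g x)"
  by (rule linI) (simp_all add: lin_add lin_scale vA.scale_right_distrib algebra_simps)
lemma lin_sum: "(\<And>a b. lin (\<lambda>x. G x a b)) \<Longrightarrow> lin (\<lambda>x. \<Sum>(a,b)\<leftarrow>xs. G x a b)"
proof (induct xs)
  case Nil then show ?case by (intro linI) (simp_all add: vA.scale_zero_right)
next
  case (Cons p xs)
  obtain a b where p: "p = (a, b)" by force
  have "lin (\<lambda>x. G x a b + (\<Sum>(a,b)\<leftarrow>xs. G x a b))" using Cons by (intro lin_plus) auto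
  then show ?case by (simp add: p)
qed
lemma lin_smA: "lin f \<Longrightarrow> lin (\<lambda>x. smA c (f x))"
  by (rule linI) (simp_all add: lin_add lin_scale vA.scale_right_distrib
     vA.scale_scale mult.commute)
lemma lin_eps_smA: "lin (\<lambda>g. smA (\<epsilon> g) w)"
  by (rule linI) (simp_all add: lin_add[OF eps_lin] lin_scale[OF eps_lin] vA.scale_left_distrib
     vA.scale_scale)
lemma bilI: "(\<And>x. lin (F x)) \<Longrightarrow> (\<And>y. lin (\<lambda>x. F x y)) \<Longrightarrow> bil F"
  by (simp add: bilin_def)
lemma bil1: "bil F \<Longrightarrow> lin (\<lambda>x. F x y)" by (simp add: bilin_def)
lemma bil2: "bil F \<Longrightarrow> lin (\<lambda>y. F x y)" by (simp add: bilin_def)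
lemma trilI: "(\<And>y z. lin (\<lambda>x. F x y z)) \<Longrightarrow> (\<And>x z. lin (\<lambda>y. F x y z)) \<Longrightarrow> (\<And>x y. lin (\<lambda>z. F x y z))
  \<Longrightarrow> trilin smH smA F"
  by (simp add: trilin_def)

lemma lin_conv: "lin f \<Longrightarrow> lin g \<Longrightarrow> lin (conv \<Delta> f g)"
  unfolding conv_def by (intro lin_Dh bilI lin_mult_r lin_mult_l) auto

lemma conv_assoc: "lin f \<Longrightarrow> lin g \<Longrightarrow> lin k \<Longrightarrow> conv \<Delta> (conv \<Delta> f g) k = conv \<Delta> f (conv \<Delta> g k)"
proof (rule ext)
  fix h assume l: "lin f" "lin g" "lin k"
  have "conv \<Delta> (conv \<Delta> f g) k h = (\<Sum>(x, y)\<leftarrow>\<Delta> h. \<Sum>(x1, x2)\<leftarrow>\<Delta> x. f x1 * g x2 * k y)"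
    by (simp add: conv_def sum_list_mult_const[symmetric] split_def)
  also have "\<dots> = (\<Sum>(x, y)\<leftarrow>\<Delta> h. \<Sum>(y1, y2)\<leftarrow>\<Delta> y. f x * g y1 * k y2)"
    by (rule D_coassoc, intro trilI lin_mult_r lin_mult_l) (use l in auto)
  also have "\<dots> = conv \<Delta> f (conv \<Delta> g k) h"
    by (simp add: conv_def sum_list_const_mult[symmetric] split_def mult.assoc)
  finally show "conv \<Delta> (conv \<Delta> f g) k h = conv \<Delta> f (conv \<Delta> g k) h" .
qed

lemma D_smA: "smA c (\<Sum>(a,b)\<leftarrow>xs. F a b) = (\<Sum>(a,b)\<leftarrow>xs. smA c (F a b))"
  by (induct xs) (auto simp: vA.scale_right_distrib vA.scale_zero_right)

lemma bil_conv2: "bil F \<Longrightarrow> bil G \<Longrightarrow> bil (conv2 \<Delta> F G)"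
proof -
  assume f: "bil F" and g: "bil G"
  have f1: "\<And>y. lin (\<lambda>x. F x y)" and f2: "\<And>x. lin (F x)" using f by (simp_all add: bilin_def)
  have g1: "\<And>y. lin (\<lambda>x. G x y)" and g2: "\<And>x. lin (G x)" using g by (simp_all add: bilin_def)
  show ?thesis unfolding conv2_def
    by (intro bilI lin_Dh lin_sum lin_mult_r lin_mult_l f1 f2 g1 g2)
qed

lemma conv2_assoc: "bil F \<Longrightarrow> bil G \<Longrightarrow> bil K \<Longrightarrow> conv2 \<Delta> (conv2 \<Delta> F G) K = conv2 \<Delta> F (conv2 \<Delta> G K)"
proof (intro ext)
  fix h l
  assume f: "bil F" and g: "bil G" and k: "bil K"
  have f1: "\<And>y. lin (\<lambda>x. F x y)" and f2: "\<And>x. lin (F x)" using f by (simp_all add: bilin_def)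
  have g1: "\<And>y. lin (\<lambda>x. G x y)" and g2: "\<And>x. lin (G x)" using g by (simp_all add: bilin_def)
  have k1: "\<And>y. lin (\<lambda>x. K x y)" and k2: "\<And>x. lin (K x)" using k by (simp_all add: bilin_def)
  have "conv2 \<Delta> (conv2 \<Delta> F G) K h l =
     (\<Sum>(x,y)\<leftarrow>\<Delta> h. \<Sum>(p,q)\<leftarrow>\<Delta> l. \<Sum>(x1,x2)\<leftarrow>\<Delta> x. \<Sum>(p1,p2)\<leftarrow>\<Delta> p. F x1 p1 * G x2 p2 * K y q)"
    by (simp add: conv2_def D_mult_const)
  also have "\<dots> = (\<Sum>(x,y)\<leftarrow>\<Delta> h. \<Sum>(x1,x2)\<leftarrow>\<Delta> x. \<Sum>(p,q)\<leftarrow>\<Delta> l. \<Sum>(p1,p2)\<leftarrow>\<Delta> p. F x1 p1 * G x2 p2 * K y q)"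
    by (rule D_cong, rule D_swap)
  also have "\<dots> = (\<Sum>(x,y)\<leftarrow>\<Delta> h. \<Sum>(y1,y2)\<leftarrow>\<Delta> y. \<Sum>(p,q)\<leftarrow>\<Delta> l. \<Sum>(p1,p2)\<leftarrow>\<Delta> p. F x p1 * G y1 p2 * K y2 q)"
    by (rule D_coassoc, intro trilI lin_sum lin_mult_r lin_mult_l f1 f2 g1 g2 k1 k2)
  also have "\<dots> = (\<Sum>(x,y)\<leftarrow>\<Delta> h. \<Sum>(y1,y2)\<leftarrow>\<Delta> y. \<Sum>(p,q)\<leftarrow>\<Delta> l. \<Sum>(q1,q2)\<leftarrow>\<Delta> q. F x p * G y1 q1 * K y2 q2)"
    by (rule D_cong, rule D_cong, rule D_coassoc, intro trilI lin_sum lin_mult_r lin_mult_l f1 f2 g1 g2 k1 k2)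
  also have "\<dots> = (\<Sum>(x,y)\<leftarrow>\<Delta> h. \<Sum>(p,q)\<leftarrow>\<Delta> l. \<Sum>(y1,y2)\<leftarrow>\<Delta> y. \<Sum>(q1,q2)\<leftarrow>\<Delta> q. F x p * G y1 q1 * K y2 q2)"
    by (rule D_cong, rule D_swap)
  also have "\<dots> = conv2 \<Delta> F (conv2 \<Delta> G K) h l"
    by (simp add: conv2_def D_const_mult mult.assoc)
  finally show "conv2 \<Delta> (conv2 \<Delta> F G) K h l = conv2 \<Delta> F (conv2 \<Delta> G K) h l" .
qed

lemma bil_Eps: "lin G \<Longrightarrow> bil (\<lambda>h g. smA (\<epsilon> g) (G h))"
  by (intro bilI lin_smA lin_eps_smA)

lemma bil_Mo: "lin G \<Longrightarrow> bil (\<lambda>h g. G (h * g))"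
  by (intro bilI linI) (simp_all add: lin_add lin_scale distrib_left distrib_right smH_mult1[symmetric] smH_mult2[symmetric])

lemma Eps_left: "(\<And>b. lin (K b)) \<Longrightarrow> conv2 \<Delta> (\<lambda>h g. smA (\<epsilon> g) (G h)) K h g = (\<Sum>(a,b)\<leftarrow>\<Delta> h. G a * K b g)"
  unfolding conv2_def
proof (rule D_cong)
  fix a b assume l: "\<And>b. lin (K b)"
  have "lin (\<lambda>d. G a * K b d)" by (intro lin_mult_l l)
  then show "(\<Sum>(c,d)\<leftarrow>\<Delta> g. smA (\<epsilon> c) (G a) * K b d) = G a * K b g"
    by (simp add: smA_mult1[symmetric] counit1)
qed

lemma Eps_right: "(\<And>a. lin (K a)) \<Longrightarrow> conv2 \<Delta> K (\<lambda>h g. smA (\<epsilon> g) (G h)) h g = (\<Sum>(a,b)\<leftarrow>\<Delta> h. K a g * G b)"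
  unfolding conv2_def
proof (rule D_cong)
  fix a b assume l: "\<And>a. lin (K a)"
  have "lin (\<lambda>d. K a d * G b)" by (intro lin_mult_r l)
  then show "(\<Sum>(c,d)\<leftarrow>\<Delta> g. K a c * smA (\<epsilon> d) (G b)) = K a g * G b"
    by (simp add: smA_mult2[symmetric] counit2)
qed

lemma Eps_conv: "lin F \<Longrightarrow> lin G \<Longrightarrow>
  conv2 \<Delta> (\<lambda>h g. smA (\<epsilon> g) (F h)) (\<lambda>h g. smA (\<epsilon> g) (G h)) = (\<lambda>h g. smA (\<epsilon> g) (conv \<Delta> F G h))"
proof (intro ext)
  fix h g assume f: "lin F" and g: "lin G"
  have "conv2 \<Delta> (\<lambda>h g. smA (\<epsilon> g) (F h)) (\<lambda>h g. smA (\<epsilon> g) (G h)) h g = (\<Sum>(a,b)\<leftarrow>\<Delta> h. smA (\<epsilon> g) (F a) * G b)"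
    by (rule Eps_right) (rule lin_eps_smA)
  also have "\<dots> = smA (\<epsilon> g) (conv \<Delta> F G h)"
    by (simp add: conv_def D_smA smA_mult1)
  finally show "conv2 \<Delta> (\<lambda>h g. smA (\<epsilon> g) (F h)) (\<lambda>h g. smA (\<epsilon> g) (G h)) h g = smA (\<epsilon> g) (conv \<Delta> F G h)" .
qed

lemma Mo_conv: "lin F \<Longrightarrow> lin G \<Longrightarrow> conv2 \<Delta> (\<lambda>h g. F (h * g)) (\<lambda>h g. G (h * g)) = (\<lambda>h g. conv \<Delta> F G (h * g))"
proof (intro ext)
  fix h g assume f: "lin F" and g: "lin G"
  have "bil (\<lambda>x y. F x * G y)" by (intro bilI lin_mult_l lin_mult_r f g)
  then show "conv2 \<Delta> (\<lambda>h g. F (h * g)) (\<lambda>h g. G (h * g)) h g = conv \<Delta> F G (h * g)"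
    by (simp add: conv_def conv2_def D_mult)
qed

lemma conv2_contract: "bil X \<Longrightarrow> bil Y \<Longrightarrow> bil Z \<Longrightarrow> conv2 \<Delta> X Y = P \<Longrightarrow> conv2 \<Delta> X (conv2 \<Delta> Y Z) = conv2 \<Delta> P Z"
  using conv2_assoc by metis

lemma U2: "lin v \<Longrightarrow> (\<And>b. lin (\<lambda>d. act b (v d))) \<Longrightarrow>
  tw_omega \<Delta> act \<omega> v vi h g = conv2 \<Delta> (conv2 \<Delta> (conv2 \<Delta> (\<lambda>h g. smA (\<epsilon> g) (v h)) (\<lambda>h g. act h (v g))) \<omega>) (\<lambda>h g. vi (h * g)) h g"
proof -
  assume lv: "lin v" and la: "\<And>b. lin (\<lambda>d. act b (v d))"
  have e: "conv2 \<Delta> (\<lambda>h g. smA (\<epsilon> g) (v h)) (\<lambda>h g. act h (v g)) = (\<lambda>x g. \<Sum>(a,b)\<leftarrow>\<Delta> x. v a * act b (v g))"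
    by (intro ext Eps_left la)
  have "conv2 \<Delta> (conv2 \<Delta> (conv2 \<Delta> (\<lambda>h g. smA (\<epsilon> g) (v h)) (\<lambda>h g. act h (v g))) \<omega>) (\<lambda>h g. vi (h * g)) h g
    = (\<Sum>(X,y)\<leftarrow>\<Delta> h. \<Sum>(p,q)\<leftarrow>\<Delta> g. \<Sum>(x,z)\<leftarrow>\<Delta> X. \<Sum>(p1,p2)\<leftarrow>\<Delta> p. \<Sum>(a,b)\<leftarrow>\<Delta> x.
          v a * act b (v p1) * \<omega> z p2 * vi (y * q))"
    unfolding e by (simp add: conv2_def D_mult_const)
  also have "\<dots> = (\<Sum>(X,y)\<leftarrow>\<Delta> h. \<Sum>(p,q)\<leftarrow>\<Delta> g. \<Sum>(x,z)\<leftarrow>\<Delta> X. \<Sum>(a,b)\<leftarrow>\<Delta> x. \<Sum>(p1,p2)\<leftarrow>\<Delta> p.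
          v a * act b (v p1) * \<omega> z p2 * vi (y * q))"
    by (rule D_cong, rule D_cong, rule D_cong, rule D_swap)
  also have "\<dots> = (\<Sum>(X,y)\<leftarrow>\<Delta> h. \<Sum>(x,z)\<leftarrow>\<Delta> X. \<Sum>(p,q)\<leftarrow>\<Delta> g. \<Sum>(a,b)\<leftarrow>\<Delta> x. \<Sum>(p1,p2)\<leftarrow>\<Delta> p.
          v a * act b (v p1) * \<omega> z p2 * vi (y * q))"
    by (rule D_cong, rule D_swap)
  also have "\<dots> = (\<Sum>(X,y)\<leftarrow>\<Delta> h. \<Sum>(x,z)\<leftarrow>\<Delta> X. \<Sum>(a,b)\<leftarrow>\<Delta> x. \<Sum>(p,q)\<leftarrow>\<Delta> g. \<Sum>(p1,p2)\<leftarrow>\<Delta> p.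
          v a * act b (v p1) * \<omega> z p2 * vi (y * q))"
    by (rule D_cong, rule D_cong, rule D_swap)
  also have "\<dots> = tw_omega \<Delta> act \<omega> v vi h g"
    unfolding tw_omega_def sum_Delta4 sum_Delta3 ..
  finally show ?thesis by simp
qed

context
  fixes act :: "'h \<Rightarrow> 'a \<Rightarrow> 'a" and \<omega> :: "'h \<Rightarrow> 'h \<Rightarrow> 'a"
  assumes tpa: "twisted_partial_action smH smA \<Delta> act \<omega>"
begin

lemma act1: "lin (\<lambda>h. act h a)" using tpa by (simp add: twisted_partial_action_def bilin_def)
lemma act2: "Vector_Spaces.linear smA smA (act h)" using tpa by (simp add: twisted_partial_action_def bilin_def)
lemma bil_omega: "bil \<omega>" using tpa by (simp add: twisted_partial_action_def)
lemma T2: "act h (a * b) = (\<Sum>(x,y)\<leftarrow>\<Delta> h. act x a * act y b)"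
  using tpa by (simp add: twisted_partial_action_def)

lemma lin_act_comp: "lin w \<Longrightarrow> lin (\<lambda>g. act b (w g))"
  using Vector_Spaces.linear_compose[of smH smA w smA "act b"] act2 by (simp add: o_def)

lemma bil_Ac: "lin w \<Longrightarrow> bil (\<lambda>h g. act h (w g))"
  by (intro bilI lin_act_comp act1)

lemma Ac_e: "lin w \<Longrightarrow> conv2 \<Delta> (\<lambda>h g. act h (w g)) (\<lambda>h g. smA (\<epsilon> g) (act h 1)) = (\<lambda>h g. act h (w g))"
proof (intro ext)
  fix h g assume w: "lin w"
  have "conv2 \<Delta> (\<lambda>h g. act h (w g)) (\<lambda>h g. smA (\<epsilon> g) (act h 1)) h g = (\<Sum>(a,b)\<leftarrow>\<Delta> h. act a (w g) * act b 1)"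
    by (rule Eps_right) (rule lin_act_comp[OF w])
  also have "\<dots> = act h (w g)" using T2[of h "w g" 1] by simp
  finally show "conv2 \<Delta> (\<lambda>h g. act h (w g)) (\<lambda>h g. smA (\<epsilon> g) (act h 1)) h g = act h (w g)" .
qed

lemma Ac_Ac: "conv2 \<Delta> (\<lambda>h g. act h (v g)) (\<lambda>h g. act h (u g)) = (\<lambda>h g. act h (conv \<Delta> v u g))"
proof (intro ext)
  fix h g
  have "conv2 \<Delta> (\<lambda>h g. act h (v g)) (\<lambda>h g. act h (u g)) h g =
     (\<Sum>(c,d)\<leftarrow>\<Delta> g. \<Sum>(a,b)\<leftarrow>\<Delta> h. act a (v c) * act b (u d))"
    unfolding conv2_def by (rule D_swap)
  also have "\<dots> = (\<Sum>(c,d)\<leftarrow>\<Delta> g. act h (v c * u d))" by (simp add: T2)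
  also have "\<dots> = act h (conv \<Delta> v u g)"
    unfolding conv_def using lin_sum_list[OF act2[of h], of "\<lambda>(c,d). v c * u d" "\<Delta> g"] by (simp add: split_def)
  finally show "conv2 \<Delta> (\<lambda>h g. act h (v g)) (\<lambda>h g. act h (u g)) h g = act h (conv \<Delta> v u g)" .
qed

lemma lin_twact: "lin u \<Longrightarrow> lin v \<Longrightarrow> lin (\<lambda>d. tw_act \<Delta> act u ui b (v d))"
  unfolding U1 conv_def by (intro lin_sum lin_mult_r lin_mult_l lin_act_comp)

lemma U3: "lin u \<Longrightarrow> lin v \<Longrightarrow>
  (\<lambda>h g. tw_act \<Delta> act u ui h (v g)) = conv2 \<Delta> (conv2 \<Delta> (\<lambda>h g. smA (\<epsilon> g) (u h)) (\<lambda>h g. act h (v g))) (\<lambda>h g. smA (\<epsilon> g) (ui h))"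
proof (intro ext)
  fix h g assume lu: "lin u" and lv: "lin v"
  have b: "bil (conv2 \<Delta> (\<lambda>h g. smA (\<epsilon> g) (u h)) (\<lambda>h g. act h (v g)))"
    by (intro bil_conv2 bil_Eps bil_Ac lu lv)
  have "conv2 \<Delta> (conv2 \<Delta> (\<lambda>h g. smA (\<epsilon> g) (u h)) (\<lambda>h g. act h (v g))) (\<lambda>h g. smA (\<epsilon> g) (ui h)) h g
     = (\<Sum>(a,b)\<leftarrow>\<Delta> h. conv2 \<Delta> (\<lambda>h g. smA (\<epsilon> g) (u h)) (\<lambda>h g. act h (v g)) a g * ui b)"
    by (rule Eps_right) (rule bil2[OF b])
  also have "\<dots> = (\<Sum>(a,b)\<leftarrow>\<Delta> h. (\<Sum>(c,d)\<leftarrow>\<Delta> a. u c * act d (v g)) * ui b)"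
    by (simp add: Eps_left lin_act_comp lv)
  also have "\<dots> = tw_act \<Delta> act u ui h (v g)" by (simp add: U1 conv_def)
  finally show "tw_act \<Delta> act u ui h (v g) = conv2 \<Delta> (conv2 \<Delta> (\<lambda>h g. smA (\<epsilon> g) (u h)) (\<lambda>h g. act h (v g))) (\<lambda>h g. smA (\<epsilon> g) (ui h)) h g"
    by simp
qed

lemma main_omega:
  assumes lu: "lin u" and lv: "lin v" and lui: "lin ui" and lvi: "lin vi"
    and inv: "conv \<Delta> ui u = (\<lambda>h. act h 1)"
  shows "tw_omega \<Delta> act \<omega> (conv \<Delta> v u) (conv \<Delta> ui vi)
           = tw_omega \<Delta> (tw_act \<Delta> act u ui) (tw_omega \<Delta> act \<omega> u ui) v vi"
proof (intro ext)
  fix h g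
  let ?V = "\<lambda>h g. smA (\<epsilon> g) (v h)"
  let ?U = "\<lambda>h g. smA (\<epsilon> g) (u h)"
  let ?Ui = "\<lambda>h g. smA (\<epsilon> g) (ui h)"
  let ?E = "\<lambda>h g. smA (\<epsilon> g) (act h 1)"
  let ?VU = "\<lambda>h g. smA (\<epsilon> g) (conv \<Delta> v u h)"
  let ?Av = "\<lambda>h g. act h (v g)"
  let ?Au = "\<lambda>h g. act h (u g)"
  let ?Avu = "\<lambda>h g. act h (conv \<Delta> v u g)"
  let ?Mui = "\<lambda>h g. ui (h * g)"
  let ?Mvi = "\<lambda>h g. vi (h * g)"
  let ?Muv = "\<lambda>h g. conv \<Delta> ui vi (h * g)"
  let ?c = "conv2 \<Delta>"
  have lvu: "lin (conv \<Delta> v u)" and luv: "lin (conv \<Delta> ui vi)" by (intro lin_conv lu lv lui lvi)+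
  have bV: "bil ?V" and bU: "bil ?U" and bUi: "bil ?Ui" and bVU: "bil ?VU" and bE: "bil ?E"
    by (intro bil_Eps lu lv lui lvu act1)+
  have bAv: "bil ?Av" and bAu: "bil ?Au" and bAvu: "bil ?Avu" by (intro bil_Ac lu lv lvu)+
  have bMui: "bil ?Mui" and bMvi: "bil ?Mvi" and bMuv: "bil ?Muv" by (intro bil_Mo lui lvi luv)+
  note bils = bV bU bUi bVU bE bAv bAu bAvu bMui bMvi bMuv bil_omega
  have l1: "tw_omega \<Delta> act \<omega> (conv \<Delta> v u) (conv \<Delta> ui vi) h g = ?c (?c (?c ?VU ?Avu) \<omega>) ?Muv h g"
    by (rule U2) (intro lvu lin_act_comp)+
  have r1: "tw_omega \<Delta> (tw_act \<Delta> act u ui) (tw_omega \<Delta> act \<omega> u ui) v vi h g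
      = ?c (?c (?c ?V (\<lambda>h g. tw_act \<Delta> act u ui h (v g))) (tw_omega \<Delta> act \<omega> u ui)) ?Mvi h g"
    by (rule U2) (intro lv lin_twact lu)+
  have r2: "(\<lambda>h g. tw_act \<Delta> act u ui h (v g)) = ?c (?c ?U ?Av) ?Ui" by (rule U3[OF lu lv])
  have r3: "tw_omega \<Delta> act \<omega> u ui = ?c (?c (?c ?U ?Au) \<omega>) ?Mui"
    by (intro ext U2 lu lin_act_comp)
  have "?c (?c (?c ?V (?c (?c ?U ?Av) ?Ui)) (?c (?c (?c ?U ?Au) \<omega>) ?Mui)) ?Mvi
      = ?c ?V (?c ?U (?c ?Av (?c ?Ui (?c ?U (?c ?Au (?c \<omega> (?c ?Mui ?Mvi)))))))"
    by (simp add: conv2_assoc bils bil_conv2)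
  also have "?c ?Mui ?Mvi = ?Muv" by (rule Mo_conv[OF lui lvi])
  also have "?c ?Ui (?c ?U (?c ?Au (?c \<omega> ?Muv))) = ?c ?E (?c ?Au (?c \<omega> ?Muv))"
    by (rule conv2_contract) (simp_all add: bils bil_conv2 Eps_conv lui lu inv)
  also have "?c ?Av (?c ?E (?c ?Au (?c \<omega> ?Muv))) = ?c ?Av (?c ?Au (?c \<omega> ?Muv))"
    by (rule conv2_contract) (simp_all add: bils bil_conv2 Ac_e lv)
  also have "?c ?Av (?c ?Au (?c \<omega> ?Muv)) = ?c ?Avu (?c \<omega> ?Muv)"
    by (rule conv2_contract) (simp_all add: bils bil_conv2 Ac_Ac)
  also have "?c ?V (?c ?U (?c ?Avu (?c \<omega> ?Muv))) = ?c ?VU (?c ?Avu (?c \<omega> ?Muv))"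
    by (rule conv2_contract) (simp_all add: bils bil_conv2 Eps_conv lu lv)
  also have "\<dots> = ?c (?c (?c ?VU ?Avu) \<omega>) ?Muv"
    by (simp add: conv2_assoc bils bil_conv2)
  finally have fin: "?c (?c (?c ?V (?c (?c ?U ?Av) ?Ui)) (?c (?c (?c ?U ?Au) \<omega>) ?Mui)) ?Mvi = ?c (?c (?c ?VU ?Avu) \<omega>) ?Muv" .
  show "tw_omega \<Delta> act \<omega> (conv \<Delta> v u) (conv \<Delta> ui vi) h g
           = tw_omega \<Delta> (tw_act \<Delta> act u ui) (tw_omega \<Delta> act \<omega> u ui) v vi h g"
    unfolding l1 r1 unfolding r2 r3 using fin by simp
qed

lemma main_act:
  assumes lu: "lin u" and lv: "lin v" and lui: "lin ui" and lvi: "lin vi"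
  shows "tw_act \<Delta> act (conv \<Delta> v u) (conv \<Delta> ui vi) h a = tw_act \<Delta> (tw_act \<Delta> act u ui) v vi h a"
proof -
  have e: "(\<lambda>h. tw_act \<Delta> act u ui h a) = conv \<Delta> (conv \<Delta> u (\<lambda>h. act h a)) ui"
    by (intro ext U1)
  show ?thesis
    unfolding U1[of _ _ _ _ h] e using lu lv lui lvi act1[of a]
    by (simp add: conv_assoc lin_conv)
qed

end

end


theorem lemma5p3:
  fixes smH :: "'k::field \<Rightarrow> 'h::ring_1 \<Rightarrow> 'h"
    and smA :: "'k \<Rightarrow> 'a::ring_1 \<Rightarrow> 'a"
    and \<Delta> :: "'h \<Rightarrow> ('h \<times> 'h) list" and \<epsilon> :: "'h \<Rightarrow> 'k" and S :: "'h \<Rightarrow> 'h"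
    and act :: "'h \<Rightarrow> 'a \<Rightarrow> 'a" and \<omega> :: "'h \<Rightarrow> 'h \<Rightarrow> 'a"
    and u v ui vi :: "'h \<Rightarrow> 'a"
  assumes "hopf_algebra smH \<Delta> \<epsilon> S"
    and "k_algebra smA"
    and "symmetric_tpa smH smA \<Delta> \<epsilon> act \<omega>"
    and "Vector_Spaces.linear smH smA u" and "Vector_Spaces.linear smH smA v"
    and "weak_conv_inverse smH smA \<Delta> act u ui"
    and "weak_conv_inverse smH smA \<Delta> act v vi"
    and "weak_conv_inverse smH smA \<Delta> act (conv \<Delta> v u) (conv \<Delta> ui vi)"
  shows "tw_omega \<Delta> act \<omega> (conv \<Delta> v u) (conv \<Delta> ui vi)
           = tw_omega \<Delta> (tw_act \<Delta> act u ui) (tw_omega \<Delta> act \<omega> u ui) v vi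
         \<and> (\<forall>h a. tw_act \<Delta> act (conv \<Delta> v u) (conv \<Delta> ui vi) h a
           = tw_act \<Delta> (tw_act \<Delta> act u ui) v vi h a)"
  proof -
  have tpa: "twisted_partial_action smH smA \<Delta> act \<omega>"
    using assms(3) by (simp add: symmetric_tpa_def)
  have lui: "Vector_Spaces.linear smH smA ui" and inv: "conv \<Delta> ui u = (\<lambda>h. act h 1)"
    using assms(6) by (simp_all add: weak_conv_inverse_def)
  have lvi: "Vector_Spaces.linear smH smA vi"
    using assms(7) by (simp add: weak_conv_inverse_def)
  show ?thesis
    using main_omega[OF assms(1,2) tpa assms(4,5) lui lvi inv]
      main_act[OF assms(1,2) tpa assms(4,5) lui lvi] by blast
qed

end
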